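(* There exist absolute constants $0<\tau<10^{-4}$, $c\ge\tau$ and $n_0$ such that for every $n\ge n_0$ the following holds. Let $K\subseteq\mathbb{R}^n$ be a convex set with $|\mathrm{vol}(K)-1/2|\le c/n$ such that some point $x\notin K$ has $\|x\|_2\le\tau$. Then, viewing $K$ as $K:\mathbb{R}^n\to\{-1,1\}$, $\mathsf{W}^{\le1}[K]\ge 1/18$.
   Context: $\mathrm{vol}(K)=\Pr_{\mathbf{g}\sim N(0,I_n)}[\mathbf{g}\in K]$. $K(x)=1$ if $x\in K$ and $-1$ otherwise. For $S\in\mathbb{N}^n$, $H_S(x)=\prod_i h_{S_i}(x_i)$ with $h_j$ the normalized univariate Hermite polynomials; $\tilde f(S)=\mathbf{E}_{\mathbf{g}\sim N(0,I_n)}[f(\mathbf{g})H_S(\mathbf{g})]$, $|S|=\sum_iS_i$, and $\mathsf{W}^{\le1}[f]=\sum_{|S|\le1}\tilde f(S)^2$. *)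

theory Defs
  imports "HOL-Probability.Probability"
begin

text \<open>Points of R^n are represented as extensional functions nat => real supported on {..<n}.\<close>

definition Rn :: "nat \<Rightarrow> (nat \<Rightarrow> real) set" where
  "Rn n = PiE {..<n} (\<lambda>_. UNIV)"

text \<open>Standard Gaussian measure N(0,I_n), completed so that every convex set is measurable.\<close>
definition gauss :: "nat \<Rightarrow> (nat \<Rightarrow> real) measure" where
  "gauss n = completion (PiM {..<n} (\<lambda>_. density lborel std_normal_density))"

definition convex_Rn :: "nat \<Rightarrow> (nat \<Rightarrow> real) set \<Rightarrow> bool" where
  "convex_Rn n K \<longleftrightarrow> K \<subseteq> Rn n \<and>
     (\<forall>x\<in>K. \<forall>y\<in>K. \<forall>t::real. 0 \<le> t \<and> t \<le> 1 \<longrightarrow>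
        (\<lambda>i\<in>{..<n}. (1 - t) * x i + t * y i) \<in> K)"

definition gvol :: "nat \<Rightarrow> (nat \<Rightarrow> real) set \<Rightarrow> real" where
  "gvol n K = measure (gauss n) K"

definition enorm :: "nat \<Rightarrow> (nat \<Rightarrow> real) \<Rightarrow> real" where
  "enorm n x = sqrt (\<Sum>i<n. (x i)\<^sup>2)"

definition pm_ind :: "(nat \<Rightarrow> real) set \<Rightarrow> (nat \<Rightarrow> real) \<Rightarrow> real" where
  "pm_ind K x = (if x \<in> K then 1 else -1)"

text \<open>Normalized univariate Hermite polynomials of degree 0 and 1: h_0 = 1, h_1(x) = x.
  Multi-index S with |S| \<le> 1 is either 0 or e_i; H_0 = 1, H_{e_i}(x) = x_i.\<close>
definition hermite_coeff0 :: "nat \<Rightarrow> ((nat \<Rightarrow> real) \<Rightarrow> real) \<Rightarrow> real" where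
  "hermite_coeff0 n f = integral\<^sup>L (gauss n) f"

definition hermite_coeff1 :: "nat \<Rightarrow> ((nat \<Rightarrow> real) \<Rightarrow> real) \<Rightarrow> nat \<Rightarrow> real" where
  "hermite_coeff1 n f i = integral\<^sup>L (gauss n) (\<lambda>x. f x * x i)"

definition W_le1 :: "nat \<Rightarrow> ((nat \<Rightarrow> real) \<Rightarrow> real) \<Rightarrow> real" where
  "W_le1 n f = (hermite_coeff0 n f)\<^sup>2 + (\<Sum>i<n. (hermite_coeff1 n f i)\<^sup>2)"

end

theory Submission
  imports Defs
begin

lemma bw_fin:
  fixes f :: "nat \<Rightarrow> nat \<Rightarrow> real"
  assumes "finite I" "\<And>k i. i \<in> I \<Longrightarrow> \<bar>f k i\<bar> \<le> B"
  shows "\<exists>r. strict_mono r \<and> (\<forall>i\<in>I. convergent (\<lambda>k. f (r k) i))"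
  using assms
proof (induction I rule: finite_induct)
  case empty
  have "strict_mono (id::nat\<Rightarrow>nat)" by (simp add: strict_mono_def)
  then show ?case by blast
next
  case (insert j I)
  then obtain r where r: "strict_mono r" "\<forall>i\<in>I. convergent (\<lambda>k. f (r k) i)" by auto
  obtain r2 where r2: "strict_mono r2" "monoseq (\<lambda>k. f (r (r2 k)) j)"
    using seq_monosub[of "\<lambda>k. f (r k) j"] by blast
  have "Bseq (\<lambda>k. f (r (r2 k)) j)"
    using insert.prems by (intro BseqI'[of _ B]) auto
  then have cj: "convergent (\<lambda>k. f (r (r2 k)) j)"
    using r2 Bseq_monoseq_convergent by blast
  have "convergent (\<lambda>k. f (r (r2 k)) i)" if "i \<in> I" for i
    using convergent_subseq_convergent[OF r(2)[rule_format, OF that] r2(1)] by (simp add: o_def)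
  moreover have "strict_mono (\<lambda>k. r (r2 k))" using strict_mono_o[OF r(1) r2(1)] by (simp add: o_def)
  ultimately show ?case using cj by blast
qed

definition ip :: "nat \<Rightarrow> (nat \<Rightarrow> real) \<Rightarrow> (nat \<Rightarrow> real) \<Rightarrow> real" where
  "ip n u w = (\<Sum>i<n. u i * w i)"

definition sqd :: "nat \<Rightarrow> (nat \<Rightarrow> real) \<Rightarrow> (nat \<Rightarrow> real) \<Rightarrow> real" where
  "sqd n u w = (\<Sum>i<n. (u i - w i)^2)"

lemma sqd_nonneg: "0 \<le> sqd n u w" unfolding sqd_def by (auto intro: sum_nonneg)

lemma coord_le_sqd: "i < n \<Longrightarrow> (u i - w i)^2 \<le> sqd n u w"
  unfolding sqd_def by (rule member_le_sum) auto

lemma closest_sep: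
  assumes conv: "convex_Rn n K" and ne: "K \<noteq> {}"
    and d: "0 < d" "\<And>y. y \<in> K \<Longrightarrow> d \<le> sqd n y z"
  shows "\<exists>w. 0 < (\<Sum>i<n. (w i)^2) \<and> (\<forall>y\<in>K. ip n w z < ip n w y)"
proof -
  define S where "S = (\<lambda>y. sqd n y z) ` K"
  define D where "D = Inf S"
  have bdd: "bdd_below S" unfolding S_def using sqd_nonneg by (auto intro!: bdd_belowI[of _ 0])
  have Sne: "S \<noteq> {}" using ne unfolding S_def by auto
  have DleS: "D \<le> sqd n y z" if "y \<in> K" for y
    unfolding D_def S_def using bdd that by (auto intro!: cInf_lower simp: S_def)
  have dD: "d \<le> D" unfolding D_def using Sne d(2) by (auto intro!: cInf_greatest simp: S_def)
  have "\<exists>y\<in>K. sqd n y z < D + 1 / (Suc k)" for k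
  proof -
    have "Inf S < D + 1 / Suc k" unfolding D_def by simp
    then obtain s where "s \<in> S" "s < D + 1 / Suc k" using cInf_lessD[OF Sne] by blast
    then show ?thesis unfolding S_def by auto
  qed
  then have "\<forall>k. \<exists>y. y \<in> K \<and> sqd n y z < D + 1 / Suc k" by blast
  then obtain y where yy: "\<forall>k. y k \<in> K \<and> sqd n (y k) z < D + 1 / Suc k"
    by (rule choice[THEN exE]) 
  then have yK: "\<And>k. y k \<in> K" and yD: "\<And>k. sqd n (y k) z < D + 1 / Suc k" by auto
  have ybd: "\<bar>y k i - z i\<bar> \<le> sqrt (D + 1)" if "i < n" for k i
  proof -
    have "(y k i - z i)^2 \<le> D + 1"
    proof -
      have "1 / real (Suc k) \<le> 1" by simp
      then show ?thesis using coord_le_sqd[OF that, of "y k" z] yD[of k] by linarith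
    qed
    then have "\<bar>y k i - z i\<bar>^2 \<le> D + 1" by simp
    then show ?thesis by (rule real_le_rsqrt)
  qed
  have "\<exists>r. strict_mono r \<and> (\<forall>i\<in>{..<n}. convergent (\<lambda>k. (\<lambda>k i. y k i - z i) (r k) i))"
    by (rule bw_fin[of _ _ "sqrt (D+1)"]) (use ybd in auto)
  then obtain r where r: "strict_mono r" and cv: "\<And>i. i < n \<Longrightarrow> convergent (\<lambda>k. y (r k) i - z i)"
    by auto
  define p where "p = (\<lambda>i. lim (\<lambda>k. y (r k) i - z i) + z i)"
  have yp: "(\<lambda>k. y (r k) i) \<longlonglongrightarrow> p i" if "i < n" for i
  proof -
    have "(\<lambda>k. y (r k) i - z i) \<longlonglongrightarrow> lim (\<lambda>k. y (r k) i - z i)"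
      using cv[OF that] convergent_LIMSEQ_iff by blast
    from tendsto_add[OF this tendsto_const[of "z i"]] show ?thesis by (simp add: p_def)
  qed
  have sqlim: "(\<lambda>k. sqd n (y (r k)) z) \<longlonglongrightarrow> sqd n p z"
    unfolding sqd_def by (intro tendsto_intros yp) auto
  have inv: "(\<lambda>k. 1 / real (Suc (r k))) \<longlonglongrightarrow> 0"
  proof -
    have "(\<lambda>k. 1 / real (Suc k)) \<longlonglongrightarrow> 0" by (rule LIMSEQ_Suc[OF lim_inverse_n'])
    from LIMSEQ_subseq_LIMSEQ[OF this r] show ?thesis by (simp add: o_def)
  qed
  have pD: "sqd n p z = D"
  proof (rule antisym)
    have "(\<lambda>k. D + 1 / real (Suc (r k))) \<longlonglongrightarrow> D + 0" by (intro tendsto_intros inv)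
    then show "sqd n p z \<le> D"
      using sqlim yD by (intro LIMSEQ_le[OF sqlim]) (auto intro: less_imp_le)
    show "D \<le> sqd n p z"
      using sqlim DleS yK by (intro LIMSEQ_le_const[OF sqlim]) auto
  qed
  have key: "0 \<le> (\<Sum>i<n. (p i - z i) * (u i - p i))" if "u \<in> K" for u
  proof -
    define A where "A = (\<Sum>i<n. (p i - z i) * (u i - p i))"
    define B where "B = (\<Sum>i<n. (u i - p i)^2)"
    have B0: "0 \<le> B" unfolding B_def by (auto intro: sum_nonneg)
    have ineq: "0 \<le> 2 * A + s * B" if s: "0 < s" "s \<le> 1" for s
    proof -
      define q where "q = (\<lambda>k. (\<lambda>i\<in>{..<n}. (1 - s) * y (r k) i + s * u i))"
      have qK: "q k \<in> K" for k
        using conv yK \<open>u \<in> K\<close> s unfolding convex_Rn_def q_def by auto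
      have "(\<lambda>k. sqd n (q k) z) \<longlonglongrightarrow> (\<Sum>i<n. ((1 - s) * p i + s * u i - z i)^2)"
        unfolding sqd_def q_def by (auto intro!: tendsto_intros yp)
      then have "D \<le> (\<Sum>i<n. ((1 - s) * p i + s * u i - z i)^2)"
        using DleS qK by (intro LIMSEQ_le_const) auto
      also have "\<dots> = (\<Sum>i<n. (p i - z i)^2 + s * (2 * ((p i - z i) * (u i - p i))) + s^2 * (u i - p i)^2)"
        by (intro sum.cong) (auto simp: power2_eq_square algebra_simps)
      also have "\<dots> = D + s * (2 * A) + s^2 * B"
        using pD by (simp add: sum.distrib sum_distrib_left A_def B_def sqd_def)
      finally have "0 \<le> s * (2 * A + s * B)" by (simp add: power2_eq_square algebra_simps)
      then show ?thesis using s by (simp add: zero_le_mult_iff)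
    qed
    show ?thesis
    proof (rule ccontr)
      assume "\<not> 0 \<le> (\<Sum>i<n. (p i - z i) * (u i - p i))"
      then have An: "A < 0" by (simp add: A_def)
      define s where "s = min 1 (- A / (B + 1))"
      have "0 < - A / (B + 1)" using An B0 by (intro divide_pos_pos) auto
      then have s0: "0 < s" "s \<le> 1" by (auto simp: s_def)
      have "s * B \<le> (- A / (B + 1)) * B"
        using B0 by (intro mult_right_mono) (auto simp: s_def)
      also have "\<dots> \<le> - A" using An B0 by (simp add: field_simps)
      finally show False using ineq[OF s0] An by linarith
    qed
  qed
  define w where "w = (\<lambda>i. p i - z i)"
  have wpos: "0 < (\<Sum>i<n. (w i)^2)" using pD dD d(1) by (simp add: w_def sqd_def)
  have "ip n w z < ip n w y" if "y \<in> K" for y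
  proof -
    have "ip n w y - ip n w z = (\<Sum>i<n. w i * (y i - p i)) + (\<Sum>i<n. (w i)^2)"
      unfolding ip_def w_def by (simp add: sum_subtractf[symmetric] sum.distrib[symmetric] power2_eq_square algebra_simps)
    then show ?thesis using key[OF that] wpos by (simp add: w_def)
  qed
  then show ?thesis using wpos by blast
qed

lemma cube_aux:
  assumes conv: "convex_Rn n K" and x: "x \<in> Rn n" and eta: "0 \<le> \<eta>" "\<eta> < \<epsilon>"
  shows "m \<le> n \<Longrightarrow> (\<forall>s::nat\<Rightarrow>bool. \<exists>q\<in>K. (\<forall>i<m. \<bar>q i - x i - (if s i then \<epsilon> else -\<epsilon>)\<bar> \<le> \<eta>)
            \<and> (\<forall>i. m \<le> i \<and> i < n \<longrightarrow> q i = x i)) \<Longrightarrow> x \<in> K"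
proof (induction m)
  case 0
  then obtain q where q: "q \<in> K" "\<And>i. i < n \<Longrightarrow> q i = x i" by blast
  have "q \<in> Rn n" using q(1) conv unfolding convex_Rn_def by blast
  then have "q = x" using x q(2) unfolding Rn_def by (intro PiE_ext) auto
  then show ?case using q by simp
next
  case (Suc m)
  have mn: "m < n" using Suc.prems by simp
  show ?case
  proof (rule Suc.IH)
    show "m \<le> n" using mn by simp
    show "\<forall>s::nat\<Rightarrow>bool. \<exists>q\<in>K. (\<forall>i<m. \<bar>q i - x i - (if s i then \<epsilon> else -\<epsilon>)\<bar> \<le> \<eta>)
            \<and> (\<forall>i. m \<le> i \<and> i < n \<longrightarrow> q i = x i)"
    proof
      fix s :: "nat \<Rightarrow> bool"
      obtain qp where qp: "qp \<in> K" "\<forall>i<Suc m. \<bar>qp i - x i - (if (s(m:=True)) i then \<epsilon> else -\<epsilon>)\<bar> \<le> \<eta>"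
        "\<forall>i. Suc m \<le> i \<and> i < n \<longrightarrow> qp i = x i"
        using Suc.prems(2) by blast
      obtain qm where qm: "qm \<in> K" "\<forall>i<Suc m. \<bar>qm i - x i - (if (s(m:=False)) i then \<epsilon> else -\<epsilon>)\<bar> \<le> \<eta>"
        "\<forall>i. Suc m \<le> i \<and> i < n \<longrightarrow> qm i = x i"
        using Suc.prems(2) by blast
      have a: "\<bar>qp m - x m - \<epsilon>\<bar> \<le> \<eta>" using qp(2)[rule_format, of m] by simp
      have b: "\<bar>qm m - x m + \<epsilon>\<bar> \<le> \<eta>" using qm(2)[rule_format, of m] by simp
      have pm: "x m < qp m" "qm m < x m" using a b eta by auto
      define t where "t = (qp m - x m) / (qp m - qm m)"
      have t: "0 \<le> t" "t \<le> 1" using pm by (auto simp: t_def field_simps)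
      have "t * (qp m - qm m) = qp m - x m" using pm by (simp add: t_def)
      then have tm: "(1 - t) * qp m + t * qm m = x m"
        by (simp add: algebra_simps)
      define q where "q = (\<lambda>i\<in>{..<n}. (1 - t) * qp i + t * qm i)"
      have qK: "q \<in> K" using conv qp(1) qm(1) t unfolding convex_Rn_def q_def by blast
      have c1: "\<bar>q i - x i - (if s i then \<epsilon> else -\<epsilon>)\<bar> \<le> \<eta>" if "i < m" for i
      proof -
        define e where "e = (if s i then \<epsilon> else -\<epsilon>)"
        have p1: "\<bar>qp i - x i - e\<bar> \<le> \<eta>" using qp(2)[rule_format, of i] that by (simp add: e_def)
        have p2: "\<bar>qm i - x i - e\<bar> \<le> \<eta>" using qm(2)[rule_format, of i] that by (simp add: e_def)
        have "q i - x i - e = (1 - t) * (qp i - x i - e) + t * (qm i - x i - e)"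
          using that mn by (simp add: q_def algebra_simps)
        also have "\<bar>\<dots>\<bar> \<le> (1 - t) * \<bar>qp i - x i - e\<bar> + t * \<bar>qm i - x i - e\<bar>"
          using t by (simp add: abs_triangle_ineq[THEN order_trans] abs_mult)
        also have "\<dots> \<le> (1 - t) * \<eta> + t * \<eta>"
          using t p1 p2 by (intro add_mono mult_left_mono) auto
        finally show ?thesis by (simp add: e_def algebra_simps)
      qed
      have c2: "q i = x i" if "m \<le> i" "i < n" for i
      proof (cases "i = m")
        case True then show ?thesis using tm that by (simp add: q_def)
      next
        case False then show ?thesis using that qp(3) qm(3) by (simp add: q_def algebra_simps)
      qed
      show "\<exists>q\<in>K. (\<forall>i<m. \<bar>q i - x i - (if s i then \<epsilon> else -\<epsilon>)\<bar> \<le> \<eta>)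
            \<and> (\<forall>i. m \<le> i \<and> i < n \<longrightarrow> q i = x i)"
        using qK c1 c2 by blast
    qed
  qed
qed


lemma sep_main:
  assumes conv: "convex_Rn n K" and x: "x \<in> Rn n" "x \<notin> K" and n: "0 < n" and rho: "0 < \<rho>"
  shows "\<exists>v. (\<Sum>i<n. (v i)^2) = 1 \<and> (\<forall>y\<in>K. ip n v y \<le> ip n v x + \<rho>)"
proof (cases "K = {}")
  case True
  have "(\<Sum>i<n. ((\<lambda>i. if i = 0 then 1 else 0::real) i)^2) = 1"
  proof -
    have "(\<Sum>i<n. ((\<lambda>i. if i = 0 then 1 else 0::real) i)^2) = (\<Sum>i<n. (if i = 0 then 1 else 0::real))"
      by (rule sum.cong) auto
    also have "\<dots> = 1" using n by (subst sum.delta) auto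
    finally show ?thesis .
  qed
  then show ?thesis using True by (intro exI[of _ "\<lambda>i. if i = 0 then 1 else 0::real"]) auto
next
  case False
  define \<epsilon> where "\<epsilon> = \<rho> / n"
  define \<eta> where "\<eta> = \<epsilon> / 2"
  have e0: "0 < \<epsilon>" using n rho by (auto simp: \<epsilon>_def)
  then have ep: "0 < \<epsilon>" "0 < \<eta>" "\<eta> < \<epsilon>" by (auto simp: \<eta>_def)
  have "\<not> (\<forall>s::nat\<Rightarrow>bool. \<exists>q\<in>K. (\<forall>i<n. \<bar>q i - x i - (if s i then \<epsilon> else -\<epsilon>)\<bar> \<le> \<eta>)
            \<and> (\<forall>i. n \<le> i \<and> i < n \<longrightarrow> q i = x i))"
    using cube_aux[OF conv x(1) less_imp_le[OF ep(2)] ep(3) order_refl] x(2) by blast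
  then obtain s :: "nat \<Rightarrow> bool" where s0: "\<forall>q\<in>K. \<not> ((\<forall>i<n. \<bar>q i - x i - (if s i then \<epsilon> else -\<epsilon>)\<bar> \<le> \<eta>)
            \<and> (\<forall>i. n \<le> i \<and> i < n \<longrightarrow> q i = x i))"
    by blast
  have s: "\<exists>i<n. \<eta> < \<bar>q i - x i - (if s i then \<epsilon> else -\<epsilon>)\<bar>" if "q \<in> K" for q
  proof -
    have "\<not> (\<forall>i<n. \<bar>q i - x i - (if s i then \<epsilon> else -\<epsilon>)\<bar> \<le> \<eta>)"
      using s0 that by auto
    then show ?thesis by (auto simp: not_le)
  qed
  define e where "e = (\<lambda>i. if s i then \<epsilon> else -\<epsilon>)"
  define z where "z = (\<lambda>i. x i + e i)"
  have dz: "\<eta>^2 \<le> sqd n q z" if qK: "q \<in> K" for q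
  proof -
    obtain i where i: "i < n" "\<eta> < \<bar>q i - x i - e i\<bar>" using s[OF qK] by (auto simp: e_def)
    have "\<eta>^2 \<le> \<bar>q i - x i - e i\<bar>^2" using i ep by (intro power_mono) auto
    also have "\<dots> = (q i - z i)^2" by (simp add: z_def algebra_simps)
    also have "\<dots> \<le> sqd n q z" by (rule coord_le_sqd[OF i(1)])
    finally show ?thesis .
  qed
  obtain w where w: "0 < (\<Sum>i<n. (w i)^2)" "\<And>y. y \<in> K \<Longrightarrow> ip n w z < ip n w y"
    using closest_sep[OF conv False, of "\<eta>^2" z] dz ep by auto
  define L where "L = sqrt (\<Sum>i<n. (w i)^2)"
  have L: "0 < L" "L^2 = (\<Sum>i<n. (w i)^2)" using w(1) by (auto simp: L_def)
  define v where "v = (\<lambda>i. - w i / L)"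
  have v1: "(\<Sum>i<n. (v i)^2) = 1"
    using L w(1) by (simp add: v_def power_divide sum_divide_distrib[symmetric])
  have vb: "\<bar>v i\<bar> \<le> 1" if "i < n" for i
  proof -
    have "(v i)^2 \<le> 1" using v1 member_le_sum[of i "{..<n}" "\<lambda>i. (v i)^2"] that by auto
    then show ?thesis using abs_square_le_1 by blast
  qed
  have ipv: "ip n v u = - ip n w u / L" for u
    by (simp add: ip_def v_def sum_divide_distrib sum_negf)
  have "ip n v z = ip n v x + (\<Sum>i<n. v i * e i)"
    by (simp add: ip_def z_def algebra_simps sum.distrib)
  also have "(\<Sum>i<n. v i * e i) \<le> (\<Sum>i<n. \<epsilon>)"
  proof (intro sum_mono)
    fix i assume "i \<in> {..<n}"
    then have "\<bar>v i\<bar> \<le> 1" using vb by auto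
    moreover have "\<bar>e i\<bar> = \<epsilon>" using ep by (auto simp: e_def)
    ultimately have "\<bar>v i * e i\<bar> \<le> \<epsilon>" using ep by (simp add: abs_mult mult_left_le_one_le)
    then show "v i * e i \<le> \<epsilon>" by simp
  qed
  also have "(\<Sum>i<n. \<epsilon>) = \<rho>" using n by (simp add: \<epsilon>_def)
  finally have vz: "ip n v z \<le> ip n v x + \<rho>" by simp
  have "ip n v y \<le> ip n v x + \<rho>" if "y \<in> K" for y
  proof -
    have "ip n v y < ip n v z" using w(2)[OF that] L(1) by (simp add: ipv divide_strict_right_mono)
    then show ?thesis using vz by simp
  qed
  then show ?thesis using v1 by blast
qed

abbreviation NN :: "real measure" where "NN \<equiv> density lborel std_normal_density"
abbreviation PP :: "nat \<Rightarrow> (nat \<Rightarrow> real) measure" where "PP n \<equiv> PiM {..<n} (\<lambda>_. NN)"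

lemma prob_NN: "prob_space NN" by (rule prob_space_normal_density) simp

lemma prob_PP: "prob_space (PP n)" by (rule prob_space_PiM) (rule prob_NN)

lemma prob_gauss: "prob_space (gauss n)"
  unfolding gauss_def by (rule prob_space.prob_space_completion[OF prob_PP])

lemma coord_distr: "i < n \<Longrightarrow> distr (PP n) borel (\<lambda>g. g i) = NN"
proof -
  assume i: "i < n"
  have "distr (PP n) borel (\<lambda>g. g i) = distr (PP n) NN (\<lambda>g. g i)"
    by (rule distr_cong) auto
  also have "\<dots> = NN" using i by (intro distr_PiM_component prob_NN) auto
  finally show ?thesis .
qed

lemma coord_distributed: "i < n \<Longrightarrow> distributed (PP n) lborel (\<lambda>g. g i) std_normal_density"
proof -
  assume i: "i < n"
  have "distr (PP n) lborel (\<lambda>g. g i) = distr (PP n) borel (\<lambda>g. g i)"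
    by (rule distr_cong) auto
  then show ?thesis using coord_distr[OF i] i unfolding distributed_def by auto
qed

lemma coord_meas: "(\<lambda>g. g i) \<in> measurable (PP n) borel"
proof (cases "i < n")
  case True then show ?thesis by (intro measurable_component_singleton[THEN measurable_compose[OF _ measurable_ident_sets]]) auto
next
  case False
  have "(\<lambda>_. undefined) \<in> measurable (PP n) (borel :: real measure)" by simp
  then show ?thesis by (rule measurable_cong[THEN iffD1, rotated]) (use False in \<open>auto simp: space_PiM PiE_def extensional_def\<close>)
qed

lemma coord_indep: "0 < n \<Longrightarrow> prob_space.indep_vars (PP n) (\<lambda>_. borel) (\<lambda>i g. g i) {..<n}"
proof -
  assume "0 < n"
  then have False: "n \<noteq> 0" by simp
  interpret P: prob_space "PP n" by (rule prob_PP)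
  have "P.indep_vars (\<lambda>_. borel) (\<lambda>i g. g i) {..<n} \<longleftrightarrow>
    distr (PP n) (\<Pi>\<^sub>M i\<in>{..<n}. borel) (\<lambda>x. \<lambda>i\<in>{..<n}. x i) = (\<Pi>\<^sub>M i\<in>{..<n}. distr (PP n) borel (\<lambda>g. g i))"
    using False coord_meas by (intro P.indep_vars_iff_distr_eq_PiM) auto
  moreover have "distr (PP n) (\<Pi>\<^sub>M i\<in>{..<n}. borel) (\<lambda>x. \<lambda>i\<in>{..<n}. x i) = PP n"
  proof -
    have "distr (PP n) (\<Pi>\<^sub>M i\<in>{..<n}. borel) (\<lambda>x. \<lambda>i\<in>{..<n}. x i) = distr (PP n) (PP n) (\<lambda>x. x)"
      by (rule distr_cong) (auto simp: space_PiM intro!: sets_PiM_cong)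
    also have "\<dots> = PP n" by (rule distr_id2) simp
    finally show ?thesis .
  qed
  moreover have "(\<Pi>\<^sub>M i\<in>{..<n}. distr (PP n) borel (\<lambda>g. g i)) = PP n"
    by (rule PiM_cong) (auto simp: coord_distr)
  ultimately show ?thesis by simp
qed

lemma lin_distributed_PP:
  assumes v: "(\<Sum>i<n. (v i)^2) = 1"
  shows "distributed (PP n) lborel (\<lambda>g. \<Sum>i<n. v i * g i) std_normal_density"
proof -
  interpret P: prob_space "PP n" by (rule prob_PP)
  define J where "J = {i. i < n \<and> v i \<noteq> 0}"
  have Jn: "J \<subseteq> {..<n}" by (auto simp: J_def)
  then have fJ: "finite J" using finite_subset by blast
  have sJ: "(\<Sum>i\<in>J. (v i)^2) = (\<Sum>i<n. (v i)^2)"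
    by (rule sum.mono_neutral_left) (auto simp: J_def)
  have Jne: "J \<noteq> {}" using sJ v by auto
  then have n0: "0 < n" using Jn by auto
  have ind: "P.indep_vars (\<lambda>_. borel) (\<lambda>i g. v i * g i) J"
    using P.indep_vars_compose2[OF P.indep_vars_subset[OF coord_indep[OF n0] Jn], of "\<lambda>i x. v i * x" "\<lambda>_. borel"]
    by auto
  have dist: "distributed (PP n) lborel (\<lambda>g. v i * g i) (normal_density 0 (\<bar>v i\<bar>))" if "i \<in> J" for i
  proof -
    have "i < n" "v i \<noteq> 0" using that by (auto simp: J_def)
    from P.normal_density_affine[OF coord_distributed[OF this(1)], of "v i" 0, OF _ this(2)]
    show ?thesis by simp
  qed
  have "distributed (PP n) lborel (\<lambda>x. \<Sum>i\<in>J. v i * x i) (normal_density (\<Sum>i\<in>J. 0) (sqrt (\<Sum>i\<in>J. (\<bar>v i\<bar>)\<^sup>2)))"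
    using fJ Jne ind dist by (intro P.sum_indep_normal) (auto simp: J_def)
  moreover have "(\<lambda>x. \<Sum>i\<in>J. v i * x i) = (\<lambda>x. \<Sum>i<n. v i * x i)"
    by (rule ext, rule sum.mono_neutral_left) (auto simp: J_def)
  ultimately show ?thesis using sJ v by simp
qed

lemma lin_distributed:
  assumes v: "(\<Sum>i<n. (v i)^2) = 1"
  shows "distributed (gauss n) lborel (\<lambda>g. \<Sum>i<n. v i * g i) std_normal_density"
proof -
  have D: "distributed (PP n) lborel (\<lambda>g. \<Sum>i<n. v i * g i) std_normal_density"
    by (rule lin_distributed_PP[OF v])
  have m: "(\<lambda>g. \<Sum>i<n. v i * g i) \<in> PP n \<rightarrow>\<^sub>M lborel" using D by (simp add: distributed_def)
  show ?thesis using D distr_completion[OF m] measurable_completion[OF m]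
    unfolding distributed_def gauss_def by simp
qed

lemma phi_le_half: "std_normal_density x \<le> 1/2"
proof -
  have "2 \<le> sqrt (2 * pi)" using pi_gt3 by (intro real_le_rsqrt) auto
  then have "1 / sqrt (2 * pi) \<le> 1/2" by (simp add: field_simps)
  moreover have "exp (- x\<^sup>2 / 2) \<le> 1" by simp
  ultimately have "1 / sqrt (2 * pi) * exp (- x\<^sup>2 / 2) \<le> 1/2 * 1"
    by (intro mult_mono) auto
  then show ?thesis unfolding std_normal_density_def by simp
qed

context prob_space
begin

lemma sn_int:
  assumes D: "distributed M lborel Y std_normal_density" and g: "g \<in> borel_measurable borel"
  shows "integrable M (\<lambda>x. g (Y x)) \<longleftrightarrow> integrable lborel (\<lambda>x. std_normal_density x * g x)"
    and "expectation (\<lambda>x. g (Y x)) = (\<integral>x. std_normal_density x * g x \<partial>lborel)"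
  using distributed_integrable[OF D, of g] distributed_integral[OF D, of g] g by auto

lemma sn_facts:
  assumes D: "distributed M lborel Y std_normal_density"
  shows "integrable M Y" "expectation Y = 0"
    "integrable M (\<lambda>x. (Y x)^2)" "expectation (\<lambda>x. (Y x)^2) = 1"
    "integrable M (\<lambda>x. \<bar>Y x\<bar>)" "expectation (\<lambda>x. \<bar>Y x\<bar>) = sqrt (2 / pi)"
proof -
  show "integrable M Y" using sn_int(1)[OF D, of "\<lambda>x. x"] integrable_std_normal_moment[of 1] by simp
  show "expectation Y = 0" using sn_int(2)[OF D, of "\<lambda>x. x"] integral_std_normal_moment_odd[of 0] by simp
  show "integrable M (\<lambda>x. (Y x)^2)" using sn_int(1)[OF D, of "\<lambda>x. x^2"] integrable_std_normal_moment[of 2] by simp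
  show "expectation (\<lambda>x. (Y x)^2) = 1" using sn_int(2)[OF D, of "\<lambda>x. x^2"] integral_std_normal_moment_even[of 1] by simp
  show "integrable M (\<lambda>x. \<bar>Y x\<bar>)" using sn_int(1)[OF D, of "\<lambda>x. \<bar>x\<bar>"] integrable_std_normal_moment_abs[of 1] by simp
  show "expectation (\<lambda>x. \<bar>Y x\<bar>) = sqrt (2 / pi)" using sn_int(2)[OF D, of "\<lambda>x. \<bar>x\<bar>"] integral_std_normal_moment_abs_odd[of 0] by simp
qed

lemma sn_prob:
  assumes D: "distributed M lborel Y std_normal_density" and A: "A \<in> sets borel"
  shows "prob {x \<in> space M. Y x \<in> A} = (\<integral>x. std_normal_density x * indicator A x \<partial>lborel)"
proof -
  have "expectation (\<lambda>x. indicator A (Y x) :: real) = expectation (indicator {x \<in> space M. Y x \<in> A})"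
    by (rule Bochner_Integration.integral_cong) (auto simp: indicator_def)
  also have "\<dots> = prob {x \<in> space M. Y x \<in> A}" by (simp add: Int_absorb2 subset_iff)
  finally have "prob {x \<in> space M. Y x \<in> A} = expectation (\<lambda>x. indicator A (Y x) :: real)" ..
  also have "\<dots> = (\<integral>x. std_normal_density x * indicator A x \<partial>lborel)"
    using A sn_int(2)[OF D, of "indicator A"] by auto
  finally show ?thesis .
qed

lemma sn_neg_half:
  assumes D: "distributed M lborel Y std_normal_density"
  shows "prob {x \<in> space M. Y x \<in> {..<0}} \<le> 1/2"
proof -
  define f where "f = std_normal_density"
  have int: "integrable lborel f" by (simp add: f_def)
  have i1: "integrable lborel (\<lambda>x. f x * indicator {..<0} x)"
    using int by (intro integrable_real_mult_indicator) auto
  have i2: "integrable lborel (\<lambda>x. f x * indicator {0<..} x)"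
    using int by (intro integrable_real_mult_indicator) auto
  have sym: "(\<integral>x. f x * indicator {..<0} x \<partial>lborel) = (\<integral>x. f x * indicator {0<..} x \<partial>lborel)"
  proof -
    have "(\<integral>x. f x * indicator {..<0} x \<partial>lborel) = (\<integral>x. f (- x) * indicator {..<0} (- x) \<partial>lborel)"
      using lborel_integral_real_affine[of "-1" "\<lambda>x. f x * indicator {..<0} x" 0] by simp
    also have "\<dots> = (\<integral>x. f x * indicator {0<..} x \<partial>lborel)"
      by (intro Bochner_Integration.integral_cong) (auto simp: f_def std_normal_density_def indicator_def)
    finally show ?thesis .
  qed
  have "(\<integral>x. f x * indicator {..<0} x \<partial>lborel) + (\<integral>x. f x * indicator {0<..} x \<partial>lborel)
      = (\<integral>x. f x * indicator {..<0} x + f x * indicator {0<..} x \<partial>lborel)"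
    using i1 i2 by simp
  also have "\<dots> \<le> (\<integral>x. f x \<partial>lborel)"
    using i1 i2 int by (intro integral_mono) (auto simp: f_def indicator_def)
  also have "\<dots> = 1" by (simp add: f_def)
  finally have "(\<integral>x. f x * indicator {..<0} x \<partial>lborel) \<le> 1/2" using sym by simp
  then show ?thesis using sn_prob[OF D, of "{..<0}"] by (simp add: f_def)
qed

lemma sn_small:
  assumes D: "distributed M lborel Y std_normal_density" and a: "0 \<le> a"
  shows "prob {x \<in> space M. Y x \<in> {0..a}} \<le> a"
proof -
  have "prob {x \<in> space M. Y x \<in> {0..a}} = (\<integral>x. std_normal_density x * indicator {0..a} x \<partial>lborel)"
    by (rule sn_prob[OF D]) simp
  also have "\<dots> \<le> (\<integral>x. indicator {0..a} x \<partial>lborel)"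
  proof (intro integral_mono)
    show "integrable lborel (\<lambda>x. std_normal_density x * indicator {0..a} x)"
      by (intro integrable_real_mult_indicator) auto
    show "integrable lborel (\<lambda>x. indicator {0..a} x :: real)"
      using a by (simp add: emeasure_lborel_Icc_eq)
    fix x show "std_normal_density x * indicator {0..a} x \<le> indicator {0..a} x"
      using phi_le_half[of x] by (auto simp: indicator_def)
  qed
  also have "\<dots> = a" using a by simp
  finally show ?thesis .
qed

lemma key_bound:
  assumes D: "distributed M lborel Y std_normal_density"
    and K: "K \<in> events" and sub: "\<And>x. x \<in> K \<Longrightarrow> Y x \<le> a" and a: "0 \<le> a"
    and vol: "1/2 - b \<le> prob K" and C: "0 < C"
  shows "expectation (\<lambda>x. indicator K x * Y x) \<le> - sqrt (2/pi) / 2 + a + C * (b + a) + 1/C"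
proof -
  have Ym[measurable]: "Y \<in> borel_measurable M" using D by (simp add: distributed_def)
  note F = sn_facts[OF D]
  define S where "S = {x \<in> space M. Y x \<in> {..<0}}"
  define T where "T = {x \<in> space M. Y x \<in> {0..a}}"
  define B where "B = S - K"
  have ev: "S \<in> events" "T \<in> events" "B \<in> events" using K by (auto simp: S_def T_def B_def)
  have Ksp: "K \<subseteq> space M" using K sets.sets_into_space by blast
  have pS: "prob S \<le> 1/2" using sn_neg_half[OF D] by (simp add: S_def)
  have pT: "prob T \<le> a" using sn_small[OF D a] by (simp add: T_def)
  have "prob K \<le> prob ((K \<inter> S) \<union> T)"
    using Ksp sub ev K by (intro finite_measure_mono) (auto simp: S_def T_def not_less)
  also have "\<dots> \<le> prob (K \<inter> S) + prob T" using ev K by (intro measure_Un_le) auto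
  finally have pK: "prob K \<le> prob (K \<inter> S) + prob T" .
  have "B = S - (K \<inter> S)" by (auto simp: B_def)
  then have "prob B = prob (S - (K \<inter> S))" by simp
  also have "\<dots> = prob S - prob (K \<inter> S)" using ev K by (intro finite_measure_Diff) auto
  finally have pB: "prob B \<le> b + a" using pS pT pK vol by linarith
  define R where "R = (\<lambda>x. (Y x - \<bar>Y x\<bar>) / 2 + a + C * indicator B x + (Y x)^2 / C)"
  have pw: "indicator K x * Y x \<le> R x" if xsp: "x \<in> space M" for x
  proof -
    have q: "0 \<le> (Y x)^2 / C" using C by simp
    have cB: "0 \<le> C * indicator B x" using C by simp
    show ?thesis
    proof (cases "x \<in> K")
      case True
      then have "Y x \<le> a" by (rule sub)
      then have "Y x \<le> (Y x - \<bar>Y x\<bar>) / 2 + a" using a by (simp add: abs_if)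
      then show ?thesis using True q cB by (simp add: R_def)
    next
      case False
      show ?thesis
      proof (cases "Y x < 0")
        case True
        have xB: "x \<in> B" using False True xsp by (auto simp: B_def S_def)
        have "C * C + C * Y x + (Y x)^2 = (C + Y x / 2)^2 + 3/4 * (Y x)^2"
          by (simp add: power2_eq_square algebra_simps)
        moreover have "0 < (Y x)^2" using True by simp
        ultimately have "0 < C * C + C * Y x + (Y x)^2"
          using zero_le_power2[of "C + Y x / 2"] by linarith
        then have "0 < (C * C + C * Y x + (Y x)^2) / C" using C by simp
        then have h: "0 \<le> Y x + C + (Y x)^2 / C" using C by (simp add: field_simps)
        have "(Y x - \<bar>Y x\<bar>) / 2 = Y x" using True by simp
        then show ?thesis using False xB h a by (simp add: R_def)
      next
        case nn: False
        then have "(Y x - \<bar>Y x\<bar>) / 2 = 0" by simp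
        then show ?thesis using False q a cB by (simp add: R_def)
      qed
    qed
  qed
  have iY: "integrable M Y" and iA: "integrable M (\<lambda>x. \<bar>Y x\<bar>)" and iY2: "integrable M (\<lambda>x. (Y x)^2)"
    using F by auto
  have "integrable M (\<lambda>x. indicator B x *\<^sub>R (1::real))" using ev(3) by (intro integrable_indicator) (auto simp: less_top[symmetric])
  then have iB: "integrable M (indicator B :: _ \<Rightarrow> real)" by simp
  have i1: "integrable M (\<lambda>x. (Y x - \<bar>Y x\<bar>) / 2)" using iY iA by auto
  have i2: "integrable M (\<lambda>x. C * indicator B x)" using iB by auto
  have i3: "integrable M (\<lambda>x. (Y x)^2 / C)" using iY2 by auto
  have iR: "integrable M R" unfolding R_def using i1 i2 i3 by auto
  have iKY: "integrable M (\<lambda>x. indicator K x * Y x)"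
    using integrable_mult_indicator[OF K iY] by simp
  have "expectation (\<lambda>x. indicator K x * Y x) \<le> expectation R"
    using iKY iR pw by (intro integral_mono) auto
  also have "expectation R = expectation (\<lambda>x. (Y x - \<bar>Y x\<bar>) / 2) + a + C * prob B + expectation (\<lambda>x. (Y x)^2) / C"
  proof -
    have "expectation R = expectation (\<lambda>x. (Y x - \<bar>Y x\<bar>) / 2 + a + C * indicator B x) + expectation (\<lambda>x. (Y x)^2 / C)"
      unfolding R_def using i1 i2 i3 by (intro Bochner_Integration.integral_add) auto
    also have "expectation (\<lambda>x. (Y x - \<bar>Y x\<bar>) / 2 + a + C * indicator B x) = expectation (\<lambda>x. (Y x - \<bar>Y x\<bar>) / 2 + a) + expectation (\<lambda>x. C * indicator B x)"
      using i1 i2 by (intro Bochner_Integration.integral_add) auto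
    also have "expectation (\<lambda>x. (Y x - \<bar>Y x\<bar>) / 2 + a) = expectation (\<lambda>x. (Y x - \<bar>Y x\<bar>) / 2) + a"
      using i1 by (subst Bochner_Integration.integral_add) (auto simp: prob_space)
    also have "expectation (\<lambda>x. C * indicator B x) = C * prob B"
      using ev(3) by simp
    also have "expectation (\<lambda>x. (Y x)^2 / C) = expectation (\<lambda>x. (Y x)^2) / C" by simp
    finally show ?thesis .
  qed
  also have "expectation (\<lambda>x. (Y x - \<bar>Y x\<bar>) / 2) = (expectation Y - expectation (\<lambda>x. \<bar>Y x\<bar>)) / 2"
    using iY iA by simp
  finally have "expectation (\<lambda>x. indicator K x * Y x) \<le> - sqrt (2/pi) / 2 + a + C * prob B + 1 / C"
    using F by simp
  also have "\<dots> \<le> - sqrt (2/pi) / 2 + a + C * (b + a) + 1 / C"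
    using pB C by simp
  finally show ?thesis .
qed

end

lemma distributed_gauss:
  assumes D: "distributed (PP n) lborel X f"
  shows "distributed (gauss n) lborel X f"
proof -
  have m: "X \<in> PP n \<rightarrow>\<^sub>M lborel" using D by (simp add: distributed_def)
  show ?thesis using D distr_completion[OF m] measurable_completion[OF m]
    unfolding distributed_def gauss_def by simp
qed

lemma cs_ip:
  assumes v: "(\<Sum>i<n. (v i)^2) = (1::real)"
  shows "(\<Sum>i<n. v i * a i)^2 \<le> (\<Sum>i<n. (a i)^2)"
proof -
  have "\<bar>\<Sum>i<n. v i * a i\<bar> \<le> (\<Sum>i<n. \<bar>v i\<bar> * \<bar>a i\<bar>)"
    by (rule order_trans[OF sum_abs]) (simp add: abs_mult)
  also have "\<dots> \<le> L2_set v {..<n} * L2_set a {..<n}" by (rule L2_set_mult_ineq)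
  also have "\<dots> = sqrt (\<Sum>i<n. (a i)^2)" using v by (simp add: L2_set_def)
  finally have "\<bar>\<Sum>i<n. v i * a i\<bar>^2 \<le> (sqrt (\<Sum>i<n. (a i)^2))^2"
    by (intro power_mono) auto
  then show ?thesis by (simp add: sum_nonneg)
qed

lemma ip_le_enorm:
  assumes v: "(\<Sum>i<n. (v i)^2) = (1::real)"
  shows "ip n v x \<le> enorm n x"
proof -
  have "ip n v x \<le> \<bar>\<Sum>i<n. v i * x i\<bar>" by (simp add: ip_def)
  also have "\<dots> \<le> (\<Sum>i<n. \<bar>v i\<bar> * \<bar>x i\<bar>)"
    by (rule order_trans[OF sum_abs]) (simp add: abs_mult)
  also have "\<dots> \<le> L2_set v {..<n} * L2_set x {..<n}" by (rule L2_set_mult_ineq)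
  also have "\<dots> = enorm n x" using v by (simp add: L2_set_def enorm_def)
  finally show ?thesis .
qed

lemma main_fixed:
  fixes n :: nat and K :: "(nat \<Rightarrow> real) set" and \<tau> c :: real
  assumes n: "1 \<le> n" and tau: "\<tau> = 1/100000" and cdef: "c = 1/100000"
    and conv: "convex_Rn n K" and vol: "\<bar>gvol n K - 1/2\<bar> \<le> c / real n"
    and x: "x \<in> Rn n" "x \<notin> K" "enorm n x \<le> \<tau>"
  shows "W_le1 n (pm_ind K) \<ge> 1/18"
proof -
  interpret G: prob_space "gauss n" by (rule prob_gauss)
  have cn: "c / real n \<le> c" using n cdef by (simp add: divide_le_eq)
  have volK: "1/2 - c / real n \<le> G.prob K" using vol by (simp add: gvol_def)
  then have "0 < G.prob K" using cn cdef by linarith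
  then have K: "K \<in> G.events" using measure_notin_sets by fastforce
  obtain v where v: "(\<Sum>i<n. (v i)^2) = 1" and sepv: "\<And>y. y \<in> K \<Longrightarrow> ip n v y \<le> ip n v x + \<tau>"
    using sep_main[OF conv x(1) x(2), of \<tau>] n tau by auto
  define Y where "Y = (\<lambda>g. \<Sum>i<n. v i * g i)"
  have D: "distributed (gauss n) lborel Y std_normal_density"
    unfolding Y_def by (rule lin_distributed[OF v])
  have subY: "Y y \<le> 2 * \<tau>" if "y \<in> K" for y
    using sepv[OF that] ip_le_enorm[OF v, of x] x(3) by (simp add: Y_def ip_def)
  have kb: "G.expectation (\<lambda>x. indicator K x * Y x) \<le> - sqrt (2/pi) / 2 + 2 * \<tau> + 100 * (c / real n + 2 * \<tau>) + 1/100"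
    by (rule G.key_bound[OF D K subY]) (use tau volK in auto)
  have "sqrt (1/2) \<le> sqrt (2/pi)" using pi_less_4 pi_gt_zero by (intro real_sqrt_le_mono) (simp add: field_simps)
  moreover have "7/10 \<le> sqrt (1/2::real)" by (intro real_le_rsqrt) (simp add: power2_eq_square)
  ultimately have sp: "7/10 \<le> sqrt (2/pi)" by linarith
  have EKY: "G.expectation (\<lambda>x. indicator K x * Y x) \<le> - 33/100"
    using kb sp cn tau cdef by simp
  note F = G.sn_facts[OF D]
  have coordD: "distributed (gauss n) lborel (\<lambda>g. g i) std_normal_density" if "i < n" for i
    by (rule distributed_gauss[OF coord_distributed[OF that]])
  have ic: "integrable (gauss n) (\<lambda>g. g i)" if "i < n" for i
    using G.sn_facts(1)[OF coordD[OF that]] .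
  have pm: "pm_ind K g = 2 * indicator K g - 1" for g by (simp add: pm_ind_def indicator_def)
  have ipm: "integrable (gauss n) (\<lambda>g. pm_ind K g * h g)" if h: "integrable (gauss n) h" for h
  proof -
    have "integrable (gauss n) (\<lambda>g. 2 * (indicator K g * h g) - h g)"
      using integrable_mult_indicator[OF K h] h by simp
    then show ?thesis by (simp add: pm algebra_simps)
  qed
  define a where "a = (\<lambda>i. hermite_coeff1 n (pm_ind K) i)"
  have "(\<Sum>i<n. v i * a i) = (\<Sum>i<n. G.expectation (\<lambda>g. v i * (pm_ind K g * g i)))"
    by (simp add: a_def hermite_coeff1_def)
  also have "\<dots> = G.expectation (\<lambda>g. \<Sum>i<n. v i * (pm_ind K g * g i))"
    using ipm ic by (intro Bochner_Integration.integral_sum[where f="\<lambda>i g. v i * (pm_ind K g * g i)", symmetric]) auto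
  also have "\<dots> = G.expectation (\<lambda>g. pm_ind K g * Y g)"
    by (simp add: Y_def sum_distrib_left mult.left_commute)
  also have "\<dots> = G.expectation (\<lambda>g. 2 * (indicator K g * Y g) - Y g)"
    by (simp add: pm algebra_simps)
  also have "\<dots> = 2 * G.expectation (\<lambda>g. indicator K g * Y g) - G.expectation Y"
    using integrable_mult_indicator[OF K F(1)] F(1) by simp
  finally have Sv: "(\<Sum>i<n. v i * a i) \<le> - 66/100" using EKY F(2) by simp
  have "66/100 \<le> \<bar>\<Sum>i<n. v i * a i\<bar>" using Sv by linarith
  then have "(66/100::real)^2 \<le> \<bar>\<Sum>i<n. v i * a i\<bar>^2" by (intro power_mono) auto
  then have "(66/100::real)^2 \<le> (\<Sum>i<n. v i * a i)^2" by simp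
  also have "\<dots> \<le> (\<Sum>i<n. (a i)^2)" by (rule cs_ip[OF v])
  also have "\<dots> \<le> W_le1 n (pm_ind K)" by (simp add: W_le1_def a_def)
  finally have "(66/100::real)^2 \<le> W_le1 n (pm_ind K)" .
  then show ?thesis by (simp add: power2_eq_square)
qed

theorem lemma5p4:
  shows "\<exists>\<tau> c :: real. \<exists>n0 :: nat. 0 < \<tau> \<and> \<tau> < 1 / 10000 \<and> c \<ge> \<tau> \<and>
    (\<forall>n \<ge> n0. \<forall>K. convex_Rn n K \<and> \<bar>gvol n K - 1/2\<bar> \<le> c / real n \<and>
        (\<exists>x \<in> Rn n. x \<notin> K \<and> enorm n x \<le> \<tau>)
      \<longrightarrow> W_le1 n (pm_ind K) \<ge> 1/18)"
  apply (rule exI[of _ "1/100000"], rule exI[of _ "1/100000"], rule exI[of _ 1])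
  using main_fixed[OF _ refl refl] by auto

end
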